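(* Let $L$ be a finite distributive lattice and let $K$ be a cutting of $L$. For every $k\ge0$, $$q_k(L\boxplus K)=q_k(L)+q_k(K)+q_{k-1}(K).$$ In particular, $|L\boxplus K|=|L|+|K|$.
   Context: For a finite poset $P$, $\mathcal{F}(P)$ is the set of filters (up-sets) of $P$ ordered by reverse inclusion; every finite distributive lattice is isomorphic to some $\mathcal{F}(P)$. A cutting of a finite distributive lattice $L$ is an interval $K=[\hat0_K,\hat1_K]$ of $L$ such that every maximal chain of $L$ meets $K$. For a cutting $K$ of $L=\mathcal{F}(P)$, let $S=\hat0_K\setminus\hat1_K$, $S_0$ the set of maximal elements of $P\setminus\hat0_K$, $S_1$ the set of minimal elements of $\hat1_K$. The poset $P_K$ is $P\cup\{x_K\}$ ($x_K$ new) where the order on $P$ is unchanged, $z<x_K$ iff $z\le s$ for some $s\in S_0$, $x_K<y$ iff $y\ge s$ for some $s\in S_1$, and $x_K$ is incomparable to every element of $S$. The convex expansion is $L\boxplus K:=\mathcal{F}(P_K)$. For a finite lattice $M$ and $k\ge0$, $q_k(M)$ is the number of convex sublattices (intervals) of $M$ isomorphic to the Boolean lattice $\mathbf{B}_k$ with $2^k$ elements (so $q_0(M)=|M|$), and $q_{-1}(M)=0$. *)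

theory Defs
  imports Main
begin

definition poset :: "'a set \<Rightarrow> ('a \<Rightarrow> 'a \<Rightarrow> bool) \<Rightarrow> bool" where
  "poset P le \<longleftrightarrow> (\<forall>x\<in>P. le x x)
     \<and> (\<forall>x\<in>P. \<forall>y\<in>P. le x y \<and> le y x \<longrightarrow> x = y)
     \<and> (\<forall>x\<in>P. \<forall>y\<in>P. \<forall>z\<in>P. le x y \<and> le y z \<longrightarrow> le x z)"

definition filters :: "'a set \<Rightarrow> ('a \<Rightarrow> 'a \<Rightarrow> bool) \<Rightarrow> 'a set set" where
  "filters P le = {F. F \<subseteq> P \<and> (\<forall>x\<in>F. \<forall>y\<in>P. le x y \<longrightarrow> y \<in> F)}"

text \<open>The order of F(P): reverse inclusion.\<close>
definition rev_incl :: "'a set \<Rightarrow> 'a set \<Rightarrow> bool" where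
  "rev_incl F G \<longleftrightarrow> G \<subseteq> F"

definition interval :: "'b set \<Rightarrow> ('b \<Rightarrow> 'b \<Rightarrow> bool) \<Rightarrow> 'b \<Rightarrow> 'b \<Rightarrow> 'b set" where
  "interval M le a b = {x\<in>M. le a x \<and> le x b}"

definition is_chain :: "'b set \<Rightarrow> ('b \<Rightarrow> 'b \<Rightarrow> bool) \<Rightarrow> 'b set \<Rightarrow> bool" where
  "is_chain M le C \<longleftrightarrow> C \<subseteq> M \<and> (\<forall>x\<in>C. \<forall>y\<in>C. le x y \<or> le y x)"

definition maximal_chain :: "'b set \<Rightarrow> ('b \<Rightarrow> 'b \<Rightarrow> bool) \<Rightarrow> 'b set \<Rightarrow> bool" where
  "maximal_chain M le C \<longleftrightarrow> is_chain M le C \<and> (\<forall>D. is_chain M le D \<and> C \<subseteq> D \<longrightarrow> D = C)"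

definition cutting :: "'a set \<Rightarrow> ('a \<Rightarrow> 'a \<Rightarrow> bool) \<Rightarrow> 'a set \<Rightarrow> 'a set \<Rightarrow> bool" where
  "cutting P le a b \<longleftrightarrow> a \<in> filters P le \<and> b \<in> filters P le \<and> rev_incl a b
     \<and> (\<forall>C. maximal_chain (filters P le) rev_incl C
            \<longrightarrow> C \<inter> interval (filters P le) rev_incl a b \<noteq> {})"

definition S0 :: "'a set \<Rightarrow> ('a \<Rightarrow> 'a \<Rightarrow> bool) \<Rightarrow> 'a set \<Rightarrow> 'a set" where
  "S0 P le a = {s\<in>P - a. \<forall>t\<in>P - a. le s t \<longrightarrow> t = s}"

definition S1 :: "'a set \<Rightarrow> ('a \<Rightarrow> 'a \<Rightarrow> bool) \<Rightarrow> 'a set \<Rightarrow> 'a set" where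
  "S1 P le b = {s\<in>b. \<forall>t\<in>b. le t s \<longrightarrow> t = s}"

text \<open>The poset P_K: carrier Some ` P plus the new element None = x_K.\<close>
definition PK :: "'a set \<Rightarrow> 'a option set" where
  "PK P = insert None (Some ` P)"

fun PK_le :: "'a set \<Rightarrow> ('a \<Rightarrow> 'a \<Rightarrow> bool) \<Rightarrow> 'a set \<Rightarrow> 'a set \<Rightarrow> 'a option \<Rightarrow> 'a option \<Rightarrow> bool" where
  "PK_le P le a b (Some x) (Some y) = le x y"
| "PK_le P le a b None None = True"
| "PK_le P le a b (Some z) None = (z \<notin> a - b \<and> (\<exists>s\<in>S0 P le a. le z s))"
| "PK_le P le a b None (Some y) = (y \<notin> a - b \<and> (\<exists>s\<in>S1 P le b. le s y))"

text \<open>Convex expansion L \<boxplus> K = F(P_K), with its order (reverse inclusion).\<close>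
definition convex_expansion :: "'a set \<Rightarrow> ('a \<Rightarrow> 'a \<Rightarrow> bool) \<Rightarrow> 'a set \<Rightarrow> 'a set \<Rightarrow> 'a option set set" where
  "convex_expansion P le a b = filters (PK P) (PK_le P le a b)"

definition order_iso :: "'b set \<Rightarrow> ('b \<Rightarrow> 'b \<Rightarrow> bool) \<Rightarrow> 'c set \<Rightarrow> ('c \<Rightarrow> 'c \<Rightarrow> bool) \<Rightarrow> bool" where
  "order_iso A leA B leB \<longleftrightarrow> (\<exists>f. bij_betw f A B \<and> (\<forall>x\<in>A. \<forall>y\<in>A. leA x y \<longleftrightarrow> leB (f x) (f y)))"

text \<open>q_k(M): number of intervals of M isomorphic to the Boolean lattice B_k
  (intervals identified by their endpoints).\<close>
definition qk :: "nat \<Rightarrow> 'b set \<Rightarrow> ('b \<Rightarrow> 'b \<Rightarrow> bool) \<Rightarrow> nat" where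
  "qk k M le = card {(x, y). x \<in> M \<and> y \<in> M \<and> le x y
      \<and> order_iso (interval M le x y) le (Pow {..<k}) (\<subseteq>)}"

end

theory Submission
  imports Defs
begin


definition antichain :: "('a \<Rightarrow> 'a \<Rightarrow> bool) \<Rightarrow> 'a set \<Rightarrow> bool" where
  "antichain le D \<longleftrightarrow> (\<forall>x\<in>D. \<forall>y\<in>D. le x y \<longrightarrow> x = y)"

definition BP :: "'a set \<Rightarrow> ('a \<Rightarrow> 'a \<Rightarrow> bool) \<Rightarrow> nat \<Rightarrow> ('a set \<times> 'a set) set" where
  "BP Q le k = {(F1, F2). F1 \<in> filters Q le \<and> F2 \<in> filters Q le \<and> F2 \<subseteq> F1
      \<and> antichain le (F1 - F2) \<and> card (F1 - F2) = k}"

lemma interval_filters: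
  "interval (filters Q le) rev_incl F1 F2 = {F \<in> filters Q le. F \<subseteq> F1 \<and> F2 \<subseteq> F}"
  unfolding interval_def rev_incl_def by auto

lemma filters_sub: "F \<in> filters Q le \<Longrightarrow> F \<subseteq> Q"
  unfolding filters_def by auto

lemma filters_Un: "F \<in> filters Q le \<Longrightarrow> G \<in> filters Q le \<Longrightarrow> F \<union> G \<in> filters Q le"
  unfolding filters_def by auto

lemma filters_Int: "F \<in> filters Q le \<Longrightarrow> G \<in> filters Q le \<Longrightarrow> F \<inter> G \<in> filters Q le"
  unfolding filters_def by auto

lemma filters_finite: "finite Q \<Longrightarrow> finite (filters Q le)"
  by (rule finite_subset[of _ "Pow Q"]) (auto simp: filters_def)

lemma poset_refl: "poset Q le \<Longrightarrow> x \<in> Q \<Longrightarrow> le x x"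
  unfolding poset_def by blast

lemma poset_antisym: "poset Q le \<Longrightarrow> x \<in> Q \<Longrightarrow> y \<in> Q \<Longrightarrow> le x y \<Longrightarrow> le y x \<Longrightarrow> x = y"
  unfolding poset_def by blast

lemma poset_trans: "poset Q le \<Longrightarrow> x \<in> Q \<Longrightarrow> y \<in> Q \<Longrightarrow> z \<in> Q \<Longrightarrow> le x y \<Longrightarrow> le y z \<Longrightarrow> le x z"
  unfolding poset_def by blast

lemma bool_iso:
  assumes "finite Q" "F1 \<in> filters Q le" "F2 \<in> filters Q le" "F2 \<subseteq> F1"
    "antichain le (F1 - F2)"
  shows "order_iso (interval (filters Q le) rev_incl F1 F2) rev_incl (Pow {..<card (F1 - F2)}) (\<subseteq>)"
proof -
  let ?D = "F1 - F2"
  let ?I = "interval (filters Q le) rev_incl F1 F2"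
  have F1Q: "F1 \<subseteq> Q" using assms(2) by (rule filters_sub)
  have finD: "finite ?D" using assms(1) F1Q finite_subset by blast
  obtain g where g: "bij_betw g ?D {..<card ?D}"
    using finite_same_card_bij[OF finD, of "{..<card ?D}"] by auto
  have b1: "bij_betw (\<lambda>F. F1 - F) ?I (Pow ?D)"
  proof (rule bij_betw_byWitness[where f'="\<lambda>A. F1 - A"])
    show "\<forall>F\<in>?I. F1 - (F1 - F) = F" unfolding interval_filters by auto
    show "\<forall>A\<in>Pow ?D. F1 - (F1 - A) = A" by auto
    show "(\<lambda>F. F1 - F) ` ?I \<subseteq> Pow ?D" unfolding interval_filters by auto
    show "(\<lambda>A. F1 - A) ` Pow ?D \<subseteq> ?I"
    proof
      fix F assume "F \<in> (\<lambda>A. F1 - A) ` Pow ?D"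
      then obtain A where A: "A \<subseteq> ?D" "F = F1 - A" by auto
      have "F \<in> filters Q le"
        unfolding filters_def
      proof (intro CollectI conjI ballI impI)
        show "F \<subseteq> Q" using A F1Q by auto
        fix x y assume x: "x \<in> F" and y: "y \<in> Q" and xy: "le x y"
        have yF1: "y \<in> F1" using assms(2) x A xy y unfolding filters_def by auto
        show "y \<in> F"
        proof (rule ccontr)
          assume "y \<notin> F"
          then have yA: "y \<in> A" using A yF1 by auto
          show False
          proof (cases "x \<in> F2")
            case True
            then have "y \<in> F2" using assms(3) xy y unfolding filters_def by auto
            then show False using yA A by auto
          next
            case False
            then have "x \<in> ?D" using x A by auto
            then have "x = y" using assms(5) yA A xy unfolding antichain_def by auto
            then show False using x A yA by auto
          qed
        qed
      qed
      then show "F \<in> ?I" unfolding interval_filters using A assms(4) by auto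
    qed
  qed
  have b2: "bij_betw (image g) (Pow ?D) (Pow {..<card ?D})" by (rule bij_betw_Pow[OF g])
  have b: "bij_betw (image g \<circ> (\<lambda>F. F1 - F)) ?I (Pow {..<card ?D})"
    by (rule bij_betw_trans[OF b1 b2])
  have inj: "inj_on g ?D" using g bij_betw_def by blast
  have ord: "\<forall>F\<in>?I. \<forall>G\<in>?I. rev_incl F G \<longleftrightarrow>
      (image g \<circ> (\<lambda>F. F1 - F)) F \<subseteq> (image g \<circ> (\<lambda>F. F1 - F)) G"
  proof (intro ballI)
    fix F G assume F: "F \<in> ?I" and G: "G \<in> ?I"
    have s: "F1 - F \<subseteq> ?D" "F1 - G \<subseteq> ?D" using F G unfolding interval_filters by auto
    have "g ` (F1 - F) \<subseteq> g ` (F1 - G) \<longleftrightarrow> F1 - F \<subseteq> F1 - G"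
    proof
      assume h: "g ` (F1 - F) \<subseteq> g ` (F1 - G)"
      show "F1 - F \<subseteq> F1 - G"
      proof
        fix x assume x: "x \<in> F1 - F"
        then have "g x \<in> g ` (F1 - G)" using h by auto
        then show "x \<in> F1 - G" using inj_on_image_mem_iff[OF inj _ s(2)] x s(1) by blast
      qed
    qed auto
    moreover have "F1 - F \<subseteq> F1 - G \<longleftrightarrow> G \<subseteq> F" using F G unfolding interval_filters by auto
    ultimately show "rev_incl F G \<longleftrightarrow>
      (image g \<circ> (\<lambda>F. F1 - F)) F \<subseteq> (image g \<circ> (\<lambda>F. F1 - F)) G"
      unfolding rev_incl_def by simp
  qed
  show ?thesis unfolding order_iso_def using b ord by blast
qed

lemma bool_anti:
  assumes pos: "poset Q le" and F1: "F1 \<in> filters Q le" and F2: "F2 \<in> filters Q le"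
    and sub: "F2 \<subseteq> F1"
    and iso: "order_iso (interval (filters Q le) rev_incl F1 F2) rev_incl (Pow {..<k}) (\<subseteq>)"
  shows "antichain le (F1 - F2)"
proof -
  let ?I = "interval (filters Q le) rev_incl F1 F2"
  obtain \<phi> where bij: "bij_betw \<phi> ?I (Pow {..<k})"
    and ord: "\<forall>F\<in>?I. \<forall>G\<in>?I. rev_incl F G \<longleftrightarrow> \<phi> F \<subseteq> \<phi> G"
    using iso unfolding order_iso_def by blast
  have F1Q: "F1 \<subseteq> Q" using F1 by (rule filters_sub)
  note refl = poset_refl[OF pos] and anti = poset_antisym[OF pos] and trans = poset_trans[OF pos]
  have inj: "inj_on \<phi> ?I" using bij bij_betw_def by blast
  have F1I: "F1 \<in> ?I" and F2I: "F2 \<in> ?I" using F1 F2 sub unfolding interval_filters by auto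
  show ?thesis unfolding antichain_def
  proof (intro ballI impI, rule ccontr)
    fix x y assume x: "x \<in> F1 - F2" and y: "y \<in> F1 - F2" and xy: "le x y" and ne: "x \<noteq> y"
    define F where "F = F2 \<union> {z\<in>F1. le y z}"
    have yQ: "y \<in> Q" and xQ: "x \<in> Q" using x y F1Q by auto
    have "F \<in> filters Q le" unfolding filters_def
    proof (intro CollectI conjI ballI impI)
      show "F \<subseteq> Q" using F1Q F2 filters_sub unfolding F_def by blast
      fix z w assume z: "z \<in> F" and w: "w \<in> Q" and zw: "le z w"
      show "w \<in> F"
      proof (cases "z \<in> F2")
        case True then show ?thesis using F2 w zw unfolding filters_def F_def by auto
      next
        case False
        then have "z \<in> F1" "le y z" using z unfolding F_def by auto
        moreover then have "le y w" using trans[OF yQ _ w] F1Q zw by auto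
        ultimately show ?thesis using F1 w zw unfolding filters_def F_def by auto
      qed
    qed
    then have FI: "F \<in> ?I" unfolding interval_filters F_def using F1Q sub by auto
    have yF: "y \<in> F" using y refl yQ unfolding F_def by auto
    have xF: "x \<notin> F" using x anti[OF xQ yQ xy] ne unfolding F_def by auto
    define Y where "Y = {..<k} - \<phi> F"
    have "Y \<in> \<phi> ` ?I" using bij unfolding bij_betw_def Y_def by auto
    then obtain G where GI: "G \<in> ?I" and GY: "\<phi> G = Y" by auto
    have Gf: "G \<in> filters Q le" using GI unfolding interval_filters by auto
    have Ff: "F \<in> filters Q le" using FI unfolding interval_filters by auto
    have UI: "F \<union> G \<in> ?I" using FI GI filters_Un[OF Ff Gf] unfolding interval_filters by auto
    have "\<phi> (F \<union> G) \<subseteq> \<phi> F" using ord UI FI unfolding rev_incl_def by blast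
    moreover have "\<phi> (F \<union> G) \<subseteq> \<phi> G" using ord UI GI unfolding rev_incl_def by blast
    ultimately have e: "\<phi> (F \<union> G) = {}" using GY Y_def by auto
    have "\<phi> F1 \<subseteq> \<phi> (F \<union> G)" using ord UI F1I unfolding rev_incl_def interval_filters by blast
    then have "\<phi> F1 = \<phi> (F \<union> G)" using e by auto
    then have "F1 = F \<union> G" using inj F1I UI inj_on_def by metis
    then have "x \<in> G" using x xF by auto
    then have yG: "y \<in> G" using Gf yQ xy unfolding filters_def by auto
    have II: "F \<inter> G \<in> ?I" using FI GI filters_Int[OF Ff Gf] unfolding interval_filters by auto
    have "\<phi> F \<subseteq> \<phi> (F \<inter> G)" using ord II FI unfolding rev_incl_def by blast
    moreover have "\<phi> G \<subseteq> \<phi> (F \<inter> G)" using ord II GI unfolding rev_incl_def by blast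
    moreover have "\<phi> F \<subseteq> {..<k}" using bij FI unfolding bij_betw_def by auto
    ultimately have "{..<k} \<subseteq> \<phi> (F \<inter> G)" using GY Y_def by auto
    moreover have "\<phi> (F \<inter> G) \<subseteq> \<phi> F2" using ord II F2I unfolding rev_incl_def interval_filters by blast
    moreover have "\<phi> F2 \<subseteq> {..<k}" using bij F2I unfolding bij_betw_def by auto
    ultimately have "\<phi> (F \<inter> G) = \<phi> F2" by auto
    then have "F \<inter> G = F2" using inj F2I II inj_on_def by metis
    then show False using yF yG y by auto
  qed
qed

lemma bool_char:
  assumes "finite Q" "poset Q le" "F1 \<in> filters Q le" "F2 \<in> filters Q le" "F2 \<subseteq> F1"
  shows "order_iso (interval (filters Q le) rev_incl F1 F2) rev_incl (Pow {..<k}) (\<subseteq>)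
     \<longleftrightarrow> antichain le (F1 - F2) \<and> card (F1 - F2) = k"
proof
  assume iso: "order_iso (interval (filters Q le) rev_incl F1 F2) rev_incl (Pow {..<k}) (\<subseteq>)"
  have ac: "antichain le (F1 - F2)" by (rule bool_anti[OF assms(2-5) iso])
  have iso2: "order_iso (interval (filters Q le) rev_incl F1 F2) rev_incl (Pow {..<card (F1 - F2)}) (\<subseteq>)"
    by (rule bool_iso[OF assms(1) assms(3-5) ac])
  have "card (interval (filters Q le) rev_incl F1 F2) = card (Pow {..<k})"
    using iso unfolding order_iso_def using bij_betw_same_card by blast
  moreover have "card (interval (filters Q le) rev_incl F1 F2) = card (Pow {..<card (F1 - F2)})"
    using iso2 unfolding order_iso_def using bij_betw_same_card by blast
  ultimately have "(2::nat) ^ k = 2 ^ card (F1 - F2)" by (simp add: card_Pow)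
  then have "k = card (F1 - F2)" by simp
  then show "antichain le (F1 - F2) \<and> card (F1 - F2) = k" using ac by simp
next
  assume "antichain le (F1 - F2) \<and> card (F1 - F2) = k"
  then show "order_iso (interval (filters Q le) rev_incl F1 F2) rev_incl (Pow {..<k}) (\<subseteq>)"
    using bool_iso[OF assms(1) assms(3-5)] by auto
qed

lemma rev_incl_iff: "rev_incl F G \<longleftrightarrow> G \<subseteq> F"
  unfolding rev_incl_def by simp

lemma qk_filters:
  assumes "finite Q" "poset Q le"
  shows "qk k (filters Q le) rev_incl = card (BP Q le k)"
proof -
  have "{(x, y). x \<in> filters Q le \<and> y \<in> filters Q le \<and> rev_incl x y
      \<and> order_iso (interval (filters Q le) rev_incl x y) rev_incl (Pow {..<k}) (\<subseteq>)} = BP Q le k"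
  proof (rule set_eqI)
    fix p :: "'a set \<times> 'a set"
    obtain x y where p: "p = (x, y)" by fastforce
    show "p \<in> {(x, y). x \<in> filters Q le \<and> y \<in> filters Q le \<and> rev_incl x y
      \<and> order_iso (interval (filters Q le) rev_incl x y) rev_incl (Pow {..<k}) (\<subseteq>)} \<longleftrightarrow> p \<in> BP Q le k"
    proof (cases "x \<in> filters Q le \<and> y \<in> filters Q le \<and> y \<subseteq> x")
      case True
      then show ?thesis unfolding p BP_def using bool_char[OF assms, of x y k]
        by (simp add: rev_incl_iff)
    next
      case False
      then show ?thesis unfolding p BP_def by (auto simp: rev_incl_iff)
    qed
  qed
  then show ?thesis unfolding qk_def by simp
qed



lemma exists_max_chain:
  assumes "finite M" "is_chain M le C0"
  shows "\<exists>C. maximal_chain M le C \<and> C0 \<subseteq> C"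
proof -
  let ?S = "{C. is_chain M le C \<and> C0 \<subseteq> C}"
  have finS: "finite ?S" by (rule finite_subset[of _ "Pow M"]) (auto simp: is_chain_def assms(1))
  have neS: "?S \<noteq> {}" using assms(2) by auto
  let ?m = "Max (card ` ?S)"
  have "?m \<in> card ` ?S" using finS neS by simp
  then obtain C where C: "C \<in> ?S" "card C = ?m" by auto
  have "maximal_chain M le C" unfolding maximal_chain_def
  proof (intro conjI allI impI)
    show "is_chain M le C" using C by auto
    fix D assume D: "is_chain M le D \<and> C \<subseteq> D"
    then have "D \<in> ?S" using C by auto
    then have "card D \<le> card C" using C finS by simp
    moreover have "finite D" using D assms(1) finite_subset unfolding is_chain_def by blast
    ultimately show "D = C" using D card_subset_eq by (metis antisym card_mono)
  qed
  then show ?thesis using C by auto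
qed

lemma exists_maximal:
  assumes "finite A" "poset A le" "z \<in> A"
  shows "\<exists>s\<in>A. le z s \<and> (\<forall>t\<in>A. le s t \<longrightarrow> t = s)"
  using assms(3)
proof (induction "card {t\<in>A. le z t}" arbitrary: z rule: less_induct)
  case less
  show ?case
  proof (cases "\<forall>t\<in>A. le z t \<longrightarrow> t = z")
    case True then show ?thesis using less.prems poset_refl[OF assms(2)] by blast
  next
    case False
    then obtain t where t: "t \<in> A" "le z t" "t \<noteq> z" by auto
    have "{u\<in>A. le t u} \<subset> {u\<in>A. le z u}"
    proof
      show "{u\<in>A. le t u} \<subseteq> {u\<in>A. le z u}"
        using poset_trans[OF assms(2)] less.prems t by blast
      have "z \<notin> {u\<in>A. le t u}" using poset_antisym[OF assms(2)] less.prems t by blast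
      moreover have "z \<in> {u\<in>A. le z u}" using poset_refl[OF assms(2)] less.prems by blast
      ultimately show "{u\<in>A. le t u} \<noteq> {u\<in>A. le z u}" by blast
    qed
    then have "card {u\<in>A. le t u} < card {u\<in>A. le z u}"
      using assms(1) by (simp add: psubset_card_mono)
    then obtain s where "s \<in> A" "le t s" "\<forall>u\<in>A. le s u \<longrightarrow> u = s"
      using less.hyps t(1) by blast
    then show ?thesis using poset_trans[OF assms(2)] less.prems t by blast
  qed
qed

lemma poset_mono: "poset Q le \<Longrightarrow> A \<subseteq> Q \<Longrightarrow> poset A le"
  unfolding poset_def by blast

lemma poset_dual: "poset Q le \<Longrightarrow> poset Q (\<lambda>x y. le y x)"
  unfolding poset_def by blast

context
  fixes P :: "'a set" and le a b
  assumes fin: "finite P" and pos: "poset P le" and cut: "cutting P le a b"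
begin

lemma a_filt: "a \<in> filters P le" and b_filt: "b \<in> filters P le" and ba: "b \<subseteq> a"
  using cut unfolding cutting_def rev_incl_def by auto

lemma aP: "a \<subseteq> P" and bP: "b \<subseteq> P"
  using a_filt b_filt filters_sub by auto

lemma dichotomy:
  assumes F: "F \<in> filters P le"
  shows "F \<subseteq> a \<or> b \<subseteq> F"
proof -
  have "is_chain (filters P le) rev_incl {F}" unfolding is_chain_def rev_incl_def using F by auto
  then obtain C where C: "maximal_chain (filters P le) rev_incl C" "F \<in> C"
    using exists_max_chain[OF filters_finite[OF fin]] by blast
  then obtain G where G: "G \<in> C" "G \<in> interval (filters P le) rev_incl a b"
    using cut unfolding cutting_def by blast
  then have Ga: "G \<subseteq> a" and Gb: "b \<subseteq> G" unfolding interval_filters by auto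
  have "rev_incl F G \<or> rev_incl G F" using C G unfolding maximal_chain_def is_chain_def by blast
  then show ?thesis using Ga Gb unfolding rev_incl_def by blast
qed

lemma cross:
  assumes x: "x \<in> P" "x \<notin> a" and y: "y \<in> b"
  shows "le x y"
proof (rule ccontr)
  assume nxy: "\<not> le x y"
  define F where "F = {z\<in>P. le x z}"
  have "F \<in> filters P le" unfolding filters_def F_def
    using poset_trans[OF pos] x(1) by blast
  then have "F \<subseteq> a \<or> b \<subseteq> F" by (rule dichotomy)
  then show False
  proof
    assume "F \<subseteq> a" then show False using x poset_refl[OF pos] unfolding F_def by blast
  next
    assume "b \<subseteq> F" then show False using y nxy unfolding F_def by blast
  qed
qed

lemma PKle_SN [simp]:
  assumes z: "z \<in> P"
  shows "PK_le P le a b (Some z) None \<longleftrightarrow> z \<notin> a"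
proof
  assume "PK_le P le a b (Some z) None"
  then obtain s where s: "s \<in> S0 P le a" "le z s" by auto
  then have "s \<in> P" "s \<notin> a" unfolding S0_def by auto
  then show "z \<notin> a" using a_filt s(2) unfolding filters_def by blast
next
  assume za: "z \<notin> a"
  have "poset (P - a) le" using poset_mono[OF pos] by blast
  then obtain s where "s \<in> P - a" "le z s" "\<forall>t\<in>P - a. le s t \<longrightarrow> t = s"
    using exists_maximal[of "P - a" le z] fin z za by blast
  then have "s \<in> S0 P le a" "le z s" unfolding S0_def by auto
  then show "PK_le P le a b (Some z) None" using za by auto
qed

lemma PKle_NS [simp]:
  assumes y: "y \<in> P"
  shows "PK_le P le a b None (Some y) \<longleftrightarrow> y \<in> b"
proof
  assume "PK_le P le a b None (Some y)"
  then obtain s where s: "s \<in> S1 P le b" "le s y" by auto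
  then have "s \<in> b" unfolding S1_def by auto
  then show "y \<in> b" using b_filt s(2) y unfolding filters_def by blast
next
  assume yb: "y \<in> b"
  have "poset b (\<lambda>x y. le y x)" using poset_dual[OF poset_mono[OF pos bP]] .
  moreover have "finite b" using fin bP finite_subset by blast
  ultimately obtain s where "s \<in> b" "le s y" "\<forall>t\<in>b. le t s \<longrightarrow> t = s"
    using exists_maximal[of b "\<lambda>x y. le y x" y] yb by blast
  then have "s \<in> S1 P le b" "le s y" unfolding S1_def by auto
  then show "PK_le P le a b None (Some y)" using yb by auto
qed

declare PK_le.simps(3)[simp del] PK_le.simps(4)[simp del]

lemma PK_poset: "poset (PK P) (PK_le P le a b)"
  unfolding poset_def
proof (intro conjI ballI impI)
  fix x assume "x \<in> PK P"
  then show "PK_le P le a b x x" unfolding PK_def using poset_refl[OF pos] by auto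
next
  fix x y assume x: "x \<in> PK P" and y: "y \<in> PK P"
    and h: "PK_le P le a b x y \<and> PK_le P le a b y x"
  show "x = y"
  proof (cases x)
    case None
    show ?thesis
    proof (cases y)
      case (Some y')
      then have "y' \<in> P" using y unfolding PK_def by auto
      then have "y' \<in> b" "y' \<notin> a" using h None Some PKle_NS PKle_SN by auto
      then show ?thesis using ba by auto
    qed (simp add: None)
  next
    case (Some x')
    then have x'P: "x' \<in> P" using x unfolding PK_def by auto
    show ?thesis
    proof (cases y)
      case None
      then have "x' \<in> b" "x' \<notin> a" using h Some x'P PKle_NS PKle_SN by auto
      then show ?thesis using ba by auto
    next
      case (Some y')
      then have "y' \<in> P" using y unfolding PK_def by auto
      then show ?thesis using h Some \<open>x = Some x'\<close> x'P poset_antisym[OF pos] by auto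
    qed
  qed
next
  fix x y z assume x: "x \<in> PK P" and y: "y \<in> PK P" and z: "z \<in> PK P"
    and h: "PK_le P le a b x y \<and> PK_le P le a b y z"
  have hx: "x = None \<or> (\<exists>x'. x = Some x' \<and> x' \<in> P)" using x unfolding PK_def by auto
  have hy: "y = None \<or> (\<exists>y'. y = Some y' \<and> y' \<in> P)" using y unfolding PK_def by auto
  have hz: "z = None \<or> (\<exists>z'. z = Some z' \<and> z' \<in> P)" using z unfolding PK_def by auto
  have bfil: "\<And>u v. u \<in> b \<Longrightarrow> v \<in> P \<Longrightarrow> le u v \<Longrightarrow> v \<in> b"
    using b_filt unfolding filters_def by blast
  have afil: "\<And>u v. u \<in> a \<Longrightarrow> v \<in> P \<Longrightarrow> le u v \<Longrightarrow> v \<in> a"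
    using a_filt unfolding filters_def by blast
  note tr = poset_trans[OF pos]
  show "PK_le P le a b x z"
    using hx hy hz
  proof (elim disjE exE conjE)
    assume "x = None" "y = None" "z = None" then show ?thesis by simp
  next
    fix z' assume "x = None" "y = None" "z = Some z'" "z' \<in> P"
    then show ?thesis using h by simp
  next
    fix y' assume "x = None" "y = Some y'" "y' \<in> P" "z = None"
    then show ?thesis by simp
  next
    fix y' z' assume "x = None" "y = Some y'" "y' \<in> P" "z = Some z'" "z' \<in> P"
    then show ?thesis using h bfil[of y' z'] by simp
  next
    fix x' assume "x = Some x'" "x' \<in> P" "y = None" "z = None"
    then show ?thesis using h by simp
  next
    fix x' z' assume "x = Some x'" "x' \<in> P" "y = None" "z = Some z'" "z' \<in> P"
    then show ?thesis using h cross by simp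
  next
    fix x' y' assume "x = Some x'" "x' \<in> P" "y = Some y'" "y' \<in> P" "z = None"
    then show ?thesis using h afil by auto
  next
    fix x' y' z' assume "x = Some x'" "x' \<in> P" "y = Some y'" "y' \<in> P" "z = Some z'" "z' \<in> P"
    then show ?thesis using h tr[of x' y' z'] by simp
  qed
qed

end



lemma filters_iff: "F \<in> filters Q le \<longleftrightarrow> F \<subseteq> Q \<and> (\<forall>x\<in>F. \<forall>y\<in>Q. le x y \<longrightarrow> y \<in> F)"
  unfolding filters_def by simp

lemma Some_diff: "Some ` A - Some ` B = Some ` (A - B)"
  by auto

lemma e1_diff: "insert None (Some ` A) - insert None (Some ` B) = Some ` (A - B)"
  by auto

lemma e10_diff: "insert None (Some ` A) - Some ` B = insert None (Some ` (A - B))"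
  by auto

lemma Some_sub: "Some ` B \<subseteq> Some ` A \<longleftrightarrow> B \<subseteq> A"
  by auto

lemma e1_sub: "insert None (Some ` B) \<subseteq> insert None (Some ` A) \<longleftrightarrow> B \<subseteq> A"
  by auto

lemma e01_sub: "Some ` B \<subseteq> insert None (Some ` A) \<longleftrightarrow> B \<subseteq> A"
  by auto

lemma e10_sub: "\<not> insert None X \<subseteq> Some ` A"
  by auto

lemma Some_inj: "Some ` A = Some ` B \<longleftrightarrow> A = B"
  by (simp add: inj_image_eq_iff)

lemma e1_inj: "insert None (Some ` A) = insert None (Some ` B) \<longleftrightarrow> A = B"
proof
  assume h: "insert None (Some ` A) = insert None (Some ` B)"
  have "Some ` A = insert None (Some ` A) - {None}" by auto
  also have "\<dots> = Some ` B" using h by auto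
  finally show "A = B" by (simp add: Some_inj)
qed simp

lemma card_Some: "card (Some ` D) = card D"
  by (simp add: card_image)

lemma card_e1: "finite D \<Longrightarrow> card (insert None (Some ` D)) = Suc (card D)"
  by (simp add: card_image)

lemma antichain_Some: "antichain (PK_le P le a b) (Some ` D) \<longleftrightarrow> antichain le D"
  unfolding antichain_def by auto

context
  fixes P :: "'a set" and le a b
  assumes fin: "finite P" and pos: "poset P le" and cut: "cutting P le a b"
begin

lemmas dich = dichotomy[OF fin pos cut]
lemmas SN = PKle_SN[OF fin pos cut]
lemmas NS = PKle_NS[OF fin pos cut]
lemmas crs = cross[OF fin pos cut]
lemmas ba' = ba[OF fin pos cut]
lemmas aP' = aP[OF fin pos cut]
lemmas bP' = bP[OF fin pos cut]
lemmas afilt = a_filt[OF fin pos cut]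
lemmas bfilt = b_filt[OF fin pos cut]
lemmas PKpos = PK_poset[OF fin pos cut]

declare PK_le.simps(3)[simp del] PK_le.simps(4)[simp del]

lemma antichain_None:
  assumes "D \<subseteq> P"
  shows "antichain (PK_le P le a b) (insert None (Some ` D)) \<longleftrightarrow> antichain le D \<and> D \<subseteq> a \<and> D \<inter> b = {}"
proof
  assume h: "antichain (PK_le P le a b) (insert None (Some ` D))"
  have "antichain le D" using h unfolding antichain_def by auto
  moreover have "D \<subseteq> a"
  proof
    fix x assume x: "x \<in> D"
    show "x \<in> a"
    proof (rule ccontr)
      assume "x \<notin> a"
      then have "PK_le P le a b (Some x) None" using SN assms x by blast
      then show False using h x unfolding antichain_def by blast
    qed
  qed
  moreover have "D \<inter> b = {}"
  proof (rule ccontr)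
    assume "D \<inter> b \<noteq> {}"
    then obtain x where x: "x \<in> D" "x \<in> b" by auto
    then have "PK_le P le a b None (Some x)" using NS assms by blast
    then show False using h x unfolding antichain_def by blast
  qed
  ultimately show "antichain le D \<and> D \<subseteq> a \<and> D \<inter> b = {}" by blast
next
  assume h: "antichain le D \<and> D \<subseteq> a \<and> D \<inter> b = {}"
  show "antichain (PK_le P le a b) (insert None (Some ` D))"
    unfolding antichain_def
  proof (intro ballI impI)
    fix x y assume x: "x \<in> insert None (Some ` D)" and y: "y \<in> insert None (Some ` D)"
      and xy: "PK_le P le a b x y"
    show "x = y"
    proof (cases x)
      case None
      show ?thesis
      proof (cases y)
        case (Some y')
        then have "y' \<in> D" using y by auto
        then have "\<not> PK_le P le a b None (Some y')" using NS assms h by blast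
        then show ?thesis using xy None Some by simp
      qed (simp add: None)
    next
      case (Some x')
      then have x': "x' \<in> D" using x by auto
      show ?thesis
      proof (cases y)
        case None
        then have "\<not> PK_le P le a b (Some x') None" using SN assms h x' by blast
        then show ?thesis using xy None Some by simp
      next
        case (Some y')
        then have "y' \<in> D" using y by auto
        then show ?thesis using h x' xy Some \<open>x = Some x'\<close> unfolding antichain_def by auto
      qed
    qed
  qed
qed

lemma PK_filters:
  "filters (PK P) (PK_le P le a b) =
     (\<lambda>F. Some ` F) ` {F\<in>filters P le. F \<subseteq> a} \<union> (\<lambda>F. insert None (Some ` F)) ` {F\<in>filters P le. b \<subseteq> F}"
proof (rule set_eqI iffI)+
  fix G assume G: "G \<in> filters (PK P) (PK_le P le a b)"
  then have GPK: "G \<subseteq> PK P" and Gc: "\<forall>x\<in>G. \<forall>y\<in>PK P. PK_le P le a b x y \<longrightarrow> y \<in> G"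
    unfolding filters_iff by auto
  define F where "F = {x. Some x \<in> G}"
  have FP: "F \<subseteq> P" using GPK unfolding F_def PK_def by auto
  have Ff: "F \<in> filters P le" unfolding filters_iff
  proof (intro conjI ballI impI FP)
    fix x y assume "x \<in> F" "y \<in> P" "le x y"
    then show "y \<in> F" using Gc unfolding F_def PK_def by auto
  qed
  show "G \<in> (\<lambda>F. Some ` F) ` {F\<in>filters P le. F \<subseteq> a} \<union> (\<lambda>F. insert None (Some ` F)) ` {F\<in>filters P le. b \<subseteq> F}"
  proof (cases "None \<in> G")
    case True
    have "G = insert None (Some ` F)"
    proof (rule set_eqI)
      fix z show "z \<in> G \<longleftrightarrow> z \<in> insert None (Some ` F)"
        using True unfolding F_def by (cases z) auto
    qed
    moreover have "b \<subseteq> F"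
    proof
      fix y assume y: "y \<in> b"
      then have yP: "y \<in> P" using bP' by auto
      then have "PK_le P le a b None (Some y)" using NS y by blast
      moreover have "Some y \<in> PK P" using yP unfolding PK_def by auto
      ultimately show "y \<in> F" using Gc True unfolding F_def by blast
    qed
    ultimately show ?thesis using Ff by blast
  next
    case False
    have "G = Some ` F"
    proof (rule set_eqI)
      fix z show "z \<in> G \<longleftrightarrow> z \<in> Some ` F"
        using False unfolding F_def by (cases z) auto
    qed
    moreover have "F \<subseteq> a"
    proof
      fix x assume x: "x \<in> F"
      show "x \<in> a"
      proof (rule ccontr)
        assume "x \<notin> a"
        then have "PK_le P le a b (Some x) None" using SN x FP by blast
        moreover have "None \<in> PK P" unfolding PK_def by auto
        ultimately show False using Gc x False unfolding F_def by blast
      qed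
    qed
    ultimately show ?thesis using Ff by blast
  qed
next
  fix G assume G: "G \<in> (\<lambda>F. Some ` F) ` {F\<in>filters P le. F \<subseteq> a} \<union> (\<lambda>F. insert None (Some ` F)) ` {F\<in>filters P le. b \<subseteq> F}"
  then show "G \<in> filters (PK P) (PK_le P le a b)"
  proof
    assume "G \<in> (\<lambda>F. Some ` F) ` {F\<in>filters P le. F \<subseteq> a}"
    then obtain F where F: "F \<in> filters P le" "F \<subseteq> a" "G = Some ` F" by auto
    show ?thesis unfolding filters_iff
    proof (intro conjI ballI impI)
      show "G \<subseteq> PK P" using F filters_sub unfolding PK_def by blast
      fix x y assume x: "x \<in> G" and y: "y \<in> PK P" and xy: "PK_le P le a b x y"
      obtain x' where x': "x = Some x'" "x' \<in> F" using x F by auto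
      have x'P: "x' \<in> P" using x' F filters_sub by blast
      show "y \<in> G"
      proof (cases y)
        case None
        then have "x' \<notin> a" using xy x' SN x'P by simp
        then show ?thesis using x' F by auto
      next
        case (Some y')
        then have "y' \<in> P" "le x' y'" using y xy x' unfolding PK_def by auto
        then show ?thesis using F x' Some unfolding filters_iff by auto
      qed
    qed
  next
    assume "G \<in> (\<lambda>F. insert None (Some ` F)) ` {F\<in>filters P le. b \<subseteq> F}"
    then obtain F where F: "F \<in> filters P le" "b \<subseteq> F" "G = insert None (Some ` F)" by auto
    show ?thesis unfolding filters_iff
    proof (intro conjI ballI impI)
      show "G \<subseteq> PK P" using F filters_sub unfolding PK_def by blast
      fix x y assume x: "x \<in> G" and y: "y \<in> PK P" and xy: "PK_le P le a b x y"
      show "y \<in> G"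
      proof (cases y)
        case None then show ?thesis using F by auto
      next
        case (Some y')
        then have y'P: "y' \<in> P" using y unfolding PK_def by auto
        show ?thesis
        proof (cases x)
          case None
          then have "y' \<in> b" using xy Some NS y'P by simp
          then show ?thesis using F Some by auto
        next
          case (Some x')
          then have "x' \<in> F" "le x' y'" using x xy \<open>y = Some y'\<close> F by auto
          then show ?thesis using F y'P \<open>y = Some y'\<close> unfolding filters_iff by auto
        qed
      qed
    qed
  qed
qed

end



context
  fixes P :: "'a set" and le a b
  assumes fin: "finite P" and pos: "poset P le" and cut: "cutting P le a b"
begin

lemmas dich' = dichotomy[OF fin pos cut]
lemmas crs' = cross[OF fin pos cut]
lemmas ba'' = ba[OF fin pos cut]
lemmas PKf = PK_filters[OF fin pos cut]
lemmas acN = antichain_None[OF fin pos cut]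

lemma BP_PK:
  "BP (PK P) (PK_le P le a b) k =
     (\<lambda>(F1, F2). (Some ` F1, Some ` F2)) ` {p \<in> BP P le k. fst p \<subseteq> a}
   \<union> (\<lambda>(F1, F2). (insert None (Some ` F1), insert None (Some ` F2))) ` {p \<in> BP P le k. b \<subseteq> snd p}
   \<union> (\<lambda>(F1, F2). (insert None (Some ` F1), Some ` F2)) ` {p \<in> BP P le (k - 1). k \<noteq> 0 \<and> fst p \<subseteq> a \<and> b \<subseteq> snd p}"
  (is "?L = ?X0 \<union> ?X1 \<union> ?X10")
proof (rule set_eqI iffI)+
  fix p assume p: "p \<in> ?L"
  obtain G1 G2 where pG: "p = (G1, G2)" by fastforce
  have G1: "G1 \<in> filters (PK P) (PK_le P le a b)" and G2: "G2 \<in> filters (PK P) (PK_le P le a b)"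
    and sub: "G2 \<subseteq> G1" and ac: "antichain (PK_le P le a b) (G1 - G2)" and cd: "card (G1 - G2) = k"
    using p unfolding pG BP_def by auto
  from G1 consider (a1) F1 where "F1 \<in> filters P le" "F1 \<subseteq> a" "G1 = Some ` F1"
    | (b1) F1 where "F1 \<in> filters P le" "b \<subseteq> F1" "G1 = insert None (Some ` F1)"
    unfolding PKf by blast
  then show "p \<in> ?X0 \<union> ?X1 \<union> ?X10"
  proof cases
    case a1
    from G2 consider (a2) F2 where "F2 \<in> filters P le" "F2 \<subseteq> a" "G2 = Some ` F2"
      | (b2) F2 where "F2 \<in> filters P le" "b \<subseteq> F2" "G2 = insert None (Some ` F2)"
      unfolding PKf by blast
    then show ?thesis
    proof cases
      case a2
      have "(F1, F2) \<in> BP P le k" unfolding BP_def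
        using a1 a2 sub ac cd by (auto simp: Some_sub Some_diff antichain_Some card_Some)
      then have "(F1, F2) \<in> {p \<in> BP P le k. fst p \<subseteq> a}" using a1 by auto
      then have "p \<in> ?X0" unfolding pG using a1 a2 by force
      then show ?thesis by blast
    next
      case b2
      then show ?thesis using a1 sub by auto
    qed
  next
    case b1
    from G2 consider (a2) F2 where "F2 \<in> filters P le" "F2 \<subseteq> a" "G2 = Some ` F2"
      | (b2) F2 where "F2 \<in> filters P le" "b \<subseteq> F2" "G2 = insert None (Some ` F2)"
      unfolding PKf by blast
    then show ?thesis
    proof cases
      case b2
      have "(F1, F2) \<in> BP P le k" unfolding BP_def
        using b1 b2 sub ac cd by (auto simp: e1_sub e1_diff antichain_Some card_Some)
      then have "(F1, F2) \<in> {p \<in> BP P le k. b \<subseteq> snd p}" using b2 by auto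
      then have "p \<in> ?X1" unfolding pG using b1 b2 by force
      then show ?thesis by blast
    next
      case a2
      have F2F1: "F2 \<subseteq> F1" using sub a2 b1 by (auto simp: e01_sub)
      have F1P: "F1 \<subseteq> P" using b1 filters_sub by blast
      have diff: "G1 - G2 = insert None (Some ` (F1 - F2))" using a2 b1 by (simp add: e10_diff)
      have D: "antichain le (F1 - F2) \<and> F1 - F2 \<subseteq> a \<and> (F1 - F2) \<inter> b = {}"
        using ac diff acN[of "F1 - F2"] F1P by auto
      have finD: "finite (F1 - F2)" using F1P fin finite_subset by blast
      have k: "k = Suc (card (F1 - F2))" using cd diff card_e1[OF finD] by simp
      have F1a: "F1 \<subseteq> a" using D F2F1 a2 by blast
      have bF2: "b \<subseteq> F2" using D b1 by blast
      have "(F1, F2) \<in> BP P le (k - 1)" unfolding BP_def using b1 a2 F2F1 D k by auto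
      then have "(F1, F2) \<in> {p \<in> BP P le (k - 1). k \<noteq> 0 \<and> fst p \<subseteq> a \<and> b \<subseteq> snd p}"
        using k F1a bF2 by auto
      then have "p \<in> ?X10" unfolding pG using b1 a2 by force
      then show ?thesis by blast
    qed
  qed
next
  fix p assume p: "p \<in> ?X0 \<union> ?X1 \<union> ?X10"
  then consider "p \<in> ?X0" | "p \<in> ?X1" | "p \<in> ?X10" by blast
  then show "p \<in> ?L"
  proof cases
    case 1
    then obtain F1 F2 where F: "(F1, F2) \<in> BP P le k" "F1 \<subseteq> a" "p = (Some ` F1, Some ` F2)" by auto
    then have F': "F1 \<in> filters P le" "F2 \<in> filters P le" "F2 \<subseteq> F1" "antichain le (F1 - F2)"
      "card (F1 - F2) = k" unfolding BP_def by auto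
    have "Some ` F1 \<in> filters (PK P) (PK_le P le a b)" "Some ` F2 \<in> filters (PK P) (PK_le P le a b)"
      unfolding PKf using F F' by auto
    then show ?thesis unfolding BP_def using F F'
      by (auto simp: Some_sub Some_diff antichain_Some card_Some)
  next
    case 2
    then obtain F1 F2 where F: "(F1, F2) \<in> BP P le k" "b \<subseteq> F2"
      "p = (insert None (Some ` F1), insert None (Some ` F2))" by auto
    then have F': "F1 \<in> filters P le" "F2 \<in> filters P le" "F2 \<subseteq> F1" "antichain le (F1 - F2)"
      "card (F1 - F2) = k" unfolding BP_def by auto
    have "insert None (Some ` F1) \<in> filters (PK P) (PK_le P le a b)"
      "insert None (Some ` F2) \<in> filters (PK P) (PK_le P le a b)"
      unfolding PKf using F F' by auto
    then show ?thesis unfolding BP_def using F F'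
      by (auto simp: e1_sub e1_diff antichain_Some card_Some)
  next
    case 3
    then obtain F1 F2 where F: "(F1, F2) \<in> BP P le (k - 1)" "k \<noteq> 0" "F1 \<subseteq> a" "b \<subseteq> F2"
      "p = (insert None (Some ` F1), Some ` F2)" by auto
    then have F': "F1 \<in> filters P le" "F2 \<in> filters P le" "F2 \<subseteq> F1" "antichain le (F1 - F2)"
      "card (F1 - F2) = k - 1" unfolding BP_def by auto
    have F1P: "F1 \<subseteq> P" using F' filters_sub by blast
    have finD: "finite (F1 - F2)" using F1P fin finite_subset by blast
    have G: "insert None (Some ` F1) \<in> filters (PK P) (PK_le P le a b)"
      "Some ` F2 \<in> filters (PK P) (PK_le P le a b)"
      unfolding PKf using F F' by auto
    have diff: "insert None (Some ` F1) - Some ` F2 = insert None (Some ` (F1 - F2))"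
      by (simp add: e10_diff)
    have ac: "antichain (PK_le P le a b) (insert None (Some ` (F1 - F2)))"
      using acN[of "F1 - F2"] F1P F F' by auto
    have cd: "card (insert None (Some ` (F1 - F2))) = k" using card_e1[OF finD] F' F by simp
    show ?thesis unfolding BP_def F(5) using G diff ac cd F'(3) by (auto simp: e01_sub)
  qed
qed

end



lemma BP_finite: "finite Q \<Longrightarrow> finite (BP Q le j)"
  by (rule finite_subset[of _ "filters Q le \<times> filters Q le"]) (auto simp: BP_def filters_finite)

lemma PK_finite: "finite P \<Longrightarrow> finite (PK P)"
  unfolding PK_def by simp

lemma int_int:
  assumes "x \<subseteq> a" "b \<subseteq> y"
  shows "interval (interval L rev_incl a b) rev_incl x y = interval L rev_incl x y"
proof (rule set_eqI)
  fix z show "z \<in> interval (interval L rev_incl a b) rev_incl x y \<longleftrightarrow> z \<in> interval L rev_incl x y"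
    using assms unfolding interval_def rev_incl_def by blast
qed

lemma inj0: "inj_on (\<lambda>(F1, F2). (Some ` F1, Some ` F2)) A"
  by (rule inj_onI) (clarsimp simp: Some_inj)

lemma inj1: "inj_on (\<lambda>(F1, F2). (insert None (Some ` F1), insert None (Some ` F2))) A"
  by (rule inj_onI) (clarsimp simp: e1_inj)

lemma inj10: "inj_on (\<lambda>(F1, F2). (insert None (Some ` F1), Some ` F2)) A"
  by (rule inj_onI) (clarsimp simp: e1_inj Some_inj)

lemma qk_K:
  assumes fin: "finite P" and pos: "poset P le"
  shows "qk j (interval (filters P le) rev_incl a b) rev_incl
    = card {p \<in> BP P le j. fst p \<subseteq> a \<and> b \<subseteq> snd p}"
proof -
  let ?K = "interval (filters P le) rev_incl a b"
  have "{(x, y). x \<in> ?K \<and> y \<in> ?K \<and> rev_incl x y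
      \<and> order_iso (interval ?K rev_incl x y) rev_incl (Pow {..<j}) (\<subseteq>)}
      = {p \<in> BP P le j. fst p \<subseteq> a \<and> b \<subseteq> snd p}"
  proof (rule set_eqI)
    fix p :: "'a set \<times> 'a set"
    obtain x y where p: "p = (x, y)" by fastforce
    show "p \<in> {(x, y). x \<in> ?K \<and> y \<in> ?K \<and> rev_incl x y
      \<and> order_iso (interval ?K rev_incl x y) rev_incl (Pow {..<j}) (\<subseteq>)}
      \<longleftrightarrow> p \<in> {p \<in> BP P le j. fst p \<subseteq> a \<and> b \<subseteq> snd p}"
    proof (cases "x \<in> filters P le \<and> y \<in> filters P le \<and> y \<subseteq> x \<and> x \<subseteq> a \<and> b \<subseteq> y")
      case True
      then have "x \<in> ?K" "y \<in> ?K" unfolding interval_filters by auto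
      moreover have "interval ?K rev_incl x y = interval (filters P le) rev_incl x y"
        using True by (intro int_int) auto
      ultimately show ?thesis unfolding p BP_def using bool_char[OF fin pos, of x y j] True
        by (simp add: rev_incl_iff)
    next
      case False
      have n1: "\<not> (x \<in> ?K \<and> y \<in> ?K \<and> rev_incl x y)"
        using False unfolding interval_filters rev_incl_iff by blast
      have n2: "\<not> ((x, y) \<in> BP P le j \<and> x \<subseteq> a \<and> b \<subseteq> y)"
        using False unfolding BP_def by blast
      show ?thesis using n1 n2 unfolding p by (simp only: mem_Collect_eq case_prod_conv prod.sel) blast
    qed
  qed
  then show ?thesis unfolding qk_def by simp
qed

theorem theorem4:
  fixes P :: "'a set" and le :: "'a \<Rightarrow> 'a \<Rightarrow> bool" and a b :: "'a set" and k :: nat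
  assumes "finite P" and "poset P le" and "cutting P le a b"
  shows "qk k (convex_expansion P le a b) rev_incl
           = qk k (filters P le) rev_incl
             + qk k (interval (filters P le) rev_incl a b) rev_incl
             + (if k = 0 then 0 else qk (k - 1) (interval (filters P le) rev_incl a b) rev_incl)
         \<and> card (convex_expansion P le a b)
           = card (filters P le) + card (interval (filters P le) rev_incl a b)"
proof
  note fin = assms(1) and pos = assms(2) and cut = assms(3)
  let ?L = "filters P le"
  let ?K = "interval (filters P le) rev_incl a b"
  let ?R = "PK_le P le a b"
  define A0 where "A0 = {p \<in> BP P le k. fst p \<subseteq> a}"
  define A1 where "A1 = {p \<in> BP P le k. b \<subseteq> snd p}"
  define A10 where "A10 = {p \<in> BP P le (k - 1). k \<noteq> 0 \<and> fst p \<subseteq> a \<and> b \<subseteq> snd p}"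
  define KB where "KB j = {p \<in> BP P le j. fst p \<subseteq> a \<and> b \<subseteq> snd p}" for j
  let ?f0 = "\<lambda>(F1, F2). (Some ` F1, Some ` F2)"
  let ?f1 = "\<lambda>(F1, F2). (insert None (Some ` F1), insert None (Some ` F2))"
  let ?f10 = "\<lambda>(F1, F2). (insert None (Some ` F1), Some ` F2)"
  have fA0: "finite A0" and fA1: "finite A1" and fA10: "finite A10"
    unfolding A0_def A1_def A10_def using BP_finite[OF fin] by auto
  have q1: "qk k (convex_expansion P le a b) rev_incl = card (BP (PK P) ?R k)"
    unfolding convex_expansion_def by (rule qk_filters[OF PK_finite[OF fin] PK_poset[OF fin pos cut]])
  have split: "BP (PK P) ?R k = ?f0 ` A0 \<union> ?f1 ` A1 \<union> ?f10 ` A10"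
    unfolding A0_def A1_def A10_def by (rule BP_PK[OF fin pos cut])
  have h0: "\<forall>q\<in>?f0 ` A0. None \<notin> fst q \<and> None \<notin> snd q" by auto
  have h1: "\<forall>q\<in>?f1 ` A1. None \<in> fst q \<and> None \<in> snd q" by auto
  have h10: "\<forall>q\<in>?f10 ` A10. None \<in> fst q \<and> None \<notin> snd q" by auto
  have d1: "?f0 ` A0 \<inter> ?f1 ` A1 = {}" using h0 h1 by blast
  have d2: "(?f0 ` A0 \<union> ?f1 ` A1) \<inter> ?f10 ` A10 = {}" using h0 h1 h10 by blast
  have "card (BP (PK P) ?R k) = card (?f0 ` A0) + card (?f1 ` A1) + card (?f10 ` A10)"
    unfolding split using d1 d2 fA0 fA1 fA10 by (simp add: card_Un_disjoint)
  also have "\<dots> = card A0 + card A1 + card A10"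
  proof -
    have "card (?f0 ` A0) = card A0" by (rule card_image[OF inj0])
    moreover have "card (?f1 ` A1) = card A1" by (rule card_image[OF inj1])
    moreover have "card (?f10 ` A10) = card A10" by (rule card_image[OF inj10])
    ultimately show ?thesis by (simp only:)
  qed
  finally have c1: "card (BP (PK P) ?R k) = card A0 + card A1 + card A10" .
  have un: "A0 \<union> A1 = BP P le k"
  proof
    show "A0 \<union> A1 \<subseteq> BP P le k" unfolding A0_def A1_def by auto
    show "BP P le k \<subseteq> A0 \<union> A1"
    proof
      fix p assume p: "p \<in> BP P le k"
      obtain F1 F2 where pF: "p = (F1, F2)" by fastforce
      have F: "F1 \<in> ?L" "F2 \<in> ?L" "F2 \<subseteq> F1" "antichain le (F1 - F2)"
        using p unfolding pF BP_def by auto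
      show "p \<in> A0 \<union> A1"
      proof (rule ccontr)
        assume "p \<notin> A0 \<union> A1"
        then have n1: "\<not> F1 \<subseteq> a" and n2: "\<not> b \<subseteq> F2" using p unfolding A0_def A1_def pF by auto
        have bF1: "b \<subseteq> F1" using dichotomy[OF fin pos cut F(1)] n1 by blast
        have F2a: "F2 \<subseteq> a" using dichotomy[OF fin pos cut F(2)] n2 by blast
        obtain x where x: "x \<in> F1" "x \<notin> a" using n1 by auto
        obtain y where y: "y \<in> b" "y \<notin> F2" using n2 by auto
        have xP: "x \<in> P" using x F(1) filters_sub by blast
        have "le x y" using cross[OF fin pos cut xP x(2) y(1)] .
        moreover have "x \<in> F1 - F2" "y \<in> F1 - F2" using x y bF1 F2a by auto
        ultimately have "x = y" using F(4) unfolding antichain_def by blast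
        then show False using x y ba[OF fin pos cut] by auto
      qed
    qed
  qed
  have int: "A0 \<inter> A1 = KB k" unfolding A0_def A1_def KB_def by auto
  have "card A0 + card A1 = card (BP P le k) + card (KB k)"
    using card_Un_Int[OF fA0 fA1] un int by simp
  moreover have "card A10 = (if k = 0 then 0 else card (KB (k - 1)))"
    unfolding A10_def KB_def by auto
  moreover have "qk k ?L rev_incl = card (BP P le k)" by (rule qk_filters[OF fin pos])
  moreover have "\<And>j. qk j ?K rev_incl = card (KB j)" unfolding KB_def by (rule qk_K[OF fin pos])
  ultimately show "qk k (convex_expansion P le a b) rev_incl
           = qk k (filters P le) rev_incl
             + qk k (interval (filters P le) rev_incl a b) rev_incl
             + (if k = 0 then 0 else qk (k - 1) (interval (filters P le) rev_incl a b) rev_incl)"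
    using q1 c1 by simp
next
  note fin = assms(1) and pos = assms(2) and cut = assms(3)
  let ?L = "filters P le"
  let ?K = "interval (filters P le) rev_incl a b"
  let ?B0 = "{F \<in> ?L. F \<subseteq> a}"
  let ?B1 = "{F \<in> ?L. b \<subseteq> F}"
  have fL: "finite ?L" using filters_finite[OF fin] .
  have fB0: "finite ?B0" and fB1: "finite ?B1" using fL by auto
  have "card (convex_expansion P le a b)
      = card ((\<lambda>F. Some ` F) ` ?B0 \<union> (\<lambda>F. insert None (Some ` F)) ` ?B1)"
    unfolding convex_expansion_def PK_filters[OF fin pos cut] ..
  also have "\<dots> = card ((\<lambda>F. Some ` F) ` ?B0) + card ((\<lambda>F. insert None (Some ` F)) ` ?B1)"
    by (rule card_Un_disjoint) (use fB0 fB1 in auto)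
  also have "\<dots> = card ?B0 + card ?B1"
  proof -
    have "inj_on (\<lambda>F. Some ` F) ?B0" by (rule inj_onI) (simp add: Some_inj)
    moreover have "inj_on (\<lambda>F. insert None (Some ` F)) ?B1" by (rule inj_onI) (simp add: e1_inj)
    ultimately show ?thesis by (simp add: card_image)
  qed
  also have "\<dots> = card (?B0 \<union> ?B1) + card (?B0 \<inter> ?B1)" by (rule card_Un_Int[OF fB0 fB1])
  also have "?B0 \<union> ?B1 = ?L" using dichotomy[OF fin pos cut] by auto
  also have "?B0 \<inter> ?B1 = ?K" unfolding interval_filters by auto
  finally show "card (convex_expansion P le a b) = card ?L + card ?K" .
qed


end
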